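(* Let $h(n)$ be the maximum size of a peak-pit Condorcet domain on $n$ alternatives and $f(n)$ the maximum size of a Condorcet domain on $n$ alternatives. Then there is a constant $C>0$ such that $f(n)\ge h(n)\ge C\left(\sqrt{2+2\sqrt2}\right)^n$ for all sufficiently large $n$; in particular $h(n)>2.1973^n$ for all sufficiently large $n$.
   Context: A domain is a set of linear orders on $[n]$. A Condorcet domain is a domain $D$ such that for every profile with an odd number of voters whose preferences all lie in $D$, the pairwise majority relation is transitive. For a triple $a<b<c$ of alternatives, call them the 1st, 2nd, 3rd; the never condition $xNp$ says the $x$-th alternative is never in position $p$ within the triple in any order of the domain. A domain is peak-pit if for every triple its restriction satisfies a never condition of the form $xN3$ or $xN1$. *)

theory Defs
  imports Complex_Main
begin

text \<open>Alternatives are 1,...,n. A linear order on [n] is a list (most preferred first)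
containing every alternative exactly once.\<close>

definition is_linorder :: "nat \<Rightarrow> nat list \<Rightarrow> bool" where
  "is_linorder n L \<longleftrightarrow> distinct L \<and> set L = {1..n}"

definition prefers :: "nat list \<Rightarrow> nat \<Rightarrow> nat \<Rightarrow> bool" where
  "prefers L a b \<longleftrightarrow> (\<exists>i j. i < j \<and> j < length L \<and> L ! i = a \<and> L ! j = b)"

definition is_domain :: "nat \<Rightarrow> nat list set \<Rightarrow> bool" where
  "is_domain n D \<longleftrightarrow> D \<subseteq> {L. is_linorder n L}"

definition majority :: "nat list list \<Rightarrow> nat \<Rightarrow> nat \<Rightarrow> bool" where
  "majority P a b \<longleftrightarrow> 2 * length (filter (\<lambda>L. prefers L a b) P) > length P"

definition condorcet_domain :: "nat \<Rightarrow> nat list set \<Rightarrow> bool" where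
  "condorcet_domain n D \<longleftrightarrow> is_domain n D \<and>
     (\<forall>P. set P \<subseteq> D \<and> odd (length P) \<longrightarrow>
        (\<forall>a\<in>{1..n}. \<forall>b\<in>{1..n}. \<forall>c\<in>{1..n}.
            majority P a b \<and> majority P b c \<longrightarrow> majority P a c))"

definition pos_in_triple :: "nat list \<Rightarrow> nat \<Rightarrow> nat \<Rightarrow> nat \<Rightarrow> nat \<Rightarrow> nat" where
  "pos_in_triple L a b c e = 1 + card {y \<in> {a, b, c}. prefers L y e}"

text \<open>Never condition xNp for the triple a<b<c: the x-th alternative of [a,b,c] is never
in position p.\<close>
definition never_cond :: "nat list set \<Rightarrow> nat \<Rightarrow> nat \<Rightarrow> nat \<Rightarrow> nat \<Rightarrow> nat \<Rightarrow> bool" where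
  "never_cond D a b c x p \<longleftrightarrow> (\<forall>L\<in>D. pos_in_triple L a b c ([a, b, c] ! (x - 1)) \<noteq> p)"

definition peak_pit :: "nat \<Rightarrow> nat list set \<Rightarrow> bool" where
  "peak_pit n D \<longleftrightarrow> (\<forall>a b c. 1 \<le> a \<and> a < b \<and> b < c \<and> c \<le> n \<longrightarrow>
      (\<exists>x\<in>{1,2,3}. never_cond D a b c x 3 \<or> never_cond D a b c x 1))"

definition f_max :: "nat \<Rightarrow> nat" where
  "f_max n = Max (card ` {D. condorcet_domain n D})"

definition h_max :: "nat \<Rightarrow> nat" where
  "h_max n = Max (card ` {D. condorcet_domain n D \<and> peak_pit n D})"

end

theory Submission
  imports Defs
begin

definition is13 :: "nat \<Rightarrow> nat \<Rightarrow> nat \<Rightarrow> bool" where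
  "is13 i j k \<longleftrightarrow> (if odd j then odd i \<or> even k else even i \<and> odd k)"

definition okp :: "nat \<Rightarrow> nat set \<Rightarrow> bool" where
  "okp e P \<longleftrightarrow> (\<forall>i j. i < j \<longrightarrow> j < e \<longrightarrow> \<not> is13 i j e \<longrightarrow> i \<in> P \<or> j \<in> P) \<and>
              (\<forall>j k. e < j \<longrightarrow> j < k \<longrightarrow> is13 e j k \<longrightarrow> \<not> (j \<in> P \<and> k \<in> P))"

datatype st = S nat | Z nat nat | V nat nat | Y nat nat

fun pl :: "st \<Rightarrow> nat set" where
  "pl (S a) = {x. x < a}"
| "pl (Z a t) = {x. x < a \<or> (a < x \<and> x < a + 2*t \<and> odd (x - a))}"
| "pl (V a t) = {x. x < a \<or> (a < x \<and> x \<le> a + 2*t \<and> even (x - a))}"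
| "pl (Y a t) = {x. x < a \<or> (a < x \<and> x < a + 2*t \<and> odd (x - a)) \<or> x = a + 2*t}"

fun okst :: "st \<Rightarrow> bool" where
  "okst (S a) = True"
| "okst (Z a t) = (1 \<le> t \<and> t \<le> 6)"
| "okst (V a t) = (even a \<and> 1 \<le> t \<and> t \<le> 6)"
| "okst (Y a t) = (odd a \<and> 1 \<le> t \<and> t \<le> 6)"

lemma ok_Z_a: "okp a (pl (Z a t))"
  unfolding okp_def is13_def by (simp; (presburger)?)

lemma ok_Z_up: "okp (a+2*t+1) (pl (Z a t))"
  unfolding okp_def is13_def by (simp; (presburger)?)

lemma ok_Z_y: "odd a \<Longrightarrow> okp (a+2*t) (pl (Z a t))"
  unfolding okp_def is13_def by (simp; (presburger)?)

lemma ok_V_a: "even a \<Longrightarrow> okp a (pl (V a t))"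
  unfolding okp_def is13_def by (simp; (presburger)?)

lemma ok_V_up: "even a \<Longrightarrow> okp (a+2*t+2) (pl (V a t))"
  unfolding okp_def is13_def by (simp; (presburger)?)

lemma ok_Y_a: "odd a \<Longrightarrow> okp a (pl (Y a t))"
  unfolding okp_def is13_def by (simp; (presburger)?)

lemma ok_S0: "okp a (pl (S a))"
  unfolding okp_def is13_def by (simp; (presburger)?)
lemma ok_S1: "okp (a+1) (pl (S a))"
  unfolding okp_def is13_def by (simp; (presburger)?)
lemma ok_S2: "even a \<Longrightarrow> okp (a+2) (pl (S a))"
  unfolding okp_def is13_def by (simp; (presburger)?)

fun amin :: "st \<Rightarrow> nat" where
  "amin (S a) = a" | "amin (Z a t) = a" | "amin (V a t) = a" | "amin (Y a t) = a"

fun mv :: "st \<Rightarrow> (nat \<times> st) list" where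
  "mv (S a) = [(a, S (a+1)), (a+1, Z a 1)] @ (if even a then [(a+2, V a 1)] else [])"
| "mv (Z a t) = [(a, if t = 1 then S (a+2) else Z (a+2) (t-1))]
     @ (if t < 6 then [(a+2*t+1, Z a (t+1))] else [])
     @ (if odd a then [(a+2*t, Y a t)] else [])"
| "mv (V a t) = [(a, Z (a+1) t)] @ (if t < 6 then [(a+2*t+2, V a (t+1))] else [])"
| "mv (Y a t) = [(a, if t = 1 then S (a+3) else Y (a+2) (t-1))]"

lemma pl_eqs:
  "pl (S (a+1)) = insert a (pl (S a))"
  "pl (Z a 1) = insert (a+1) (pl (S a))"
  "pl (V a 1) = insert (a+2) (pl (S a))"
  "pl (S (a+2)) = insert a (pl (Z a 1))"
  "2 \<le> t \<Longrightarrow> pl (Z (a+2) (t-1)) = insert a (pl (Z a t))"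
  "pl (Z a (t+1)) = insert (a+2*t+1) (pl (Z a t))"
  "pl (Y a t) = insert (a+2*t) (pl (Z a t))"
  "pl (Z (a+1) t) = insert a (pl (V a t))"
  "pl (V a (t+1)) = insert (a+2*t+2) (pl (V a t))"
  "pl (S (a+3)) = insert a (pl (Y a 1))"
  "2 \<le> t \<Longrightarrow> pl (Y (a+2) (t-1)) = insert a (pl (Y a t))"
  by (auto; presburger)+

lemma mv_ok:
  assumes "okst s" "(e, s') \<in> set (mv s)"
  shows "e \<notin> pl s \<and> okp e (pl s) \<and> pl s' = insert e (pl s) \<and> okst s' \<and> e < amin s + 14"
proof (cases s)
  case (S a)
  from assms(2) S have "(e,s') = (a, S (a+1)) \<or> (e,s') = (a+1, Z a 1) \<or> (even a \<and> (e,s') = (a+2, V a 1))"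
    by (auto split: if_splits)
  then show ?thesis
  proof (elim disjE conjE)
    assume "(e,s') = (a, S (a+1))"
    moreover have "a \<notin> pl (S a)" by simp
    ultimately show ?thesis using S ok_S0[of a] pl_eqs(1)[of a] by (simp del: pl.simps)
  next
    assume "(e,s') = (a+1, Z a 1)"
    moreover have "a+1 \<notin> pl (S a)" by simp
    ultimately show ?thesis using S ok_S1[of a] pl_eqs(2)[of a] by (simp del: pl.simps)
  next
    assume "even a" "(e,s') = (a+2, V a 1)"
    moreover have "a+2 \<notin> pl (S a)" by simp
    ultimately show ?thesis using S ok_S2[of a] pl_eqs(3)[of a] by (simp del: pl.simps)
  qed
next
  case (Z a t)
  have t: "1 \<le> t" "t \<le> 6" using assms(1) Z by auto
  from assms(2) Z have "(t = 1 \<and> (e,s') = (a, S (a+2))) \<or> (t \<noteq> 1 \<and> (e,s') = (a, Z (a+2) (t-1))) \<or>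
      (t < 6 \<and> (e,s') = (a+2*t+1, Z a (t+1))) \<or> (odd a \<and> (e,s') = (a+2*t, Y a t))"
    by (auto split: if_splits)
  then show ?thesis
  proof (elim disjE conjE)
    assume "t = 1" "(e,s') = (a, S (a+2))"
    moreover have "a \<notin> pl (Z a t)" by simp
    ultimately show ?thesis using Z ok_Z_a[of a t] pl_eqs(4)[of a] by (simp del: pl.simps)
  next
    assume "t \<noteq> 1" "(e,s') = (a, Z (a+2) (t-1))"
    moreover have "a \<notin> pl (Z a t)" by simp
    moreover have "2 \<le> t" using t \<open>t \<noteq> 1\<close> by simp
    ultimately show ?thesis using Z t ok_Z_a[of a t] pl_eqs(5)[of t a] by (simp del: pl.simps; arith)
  next
    assume "t < 6" "(e,s') = (a+2*t+1, Z a (t+1))"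
    moreover have "a+2*t+1 \<notin> pl (Z a t)" by (simp; (presburger)?)
    ultimately show ?thesis using Z t ok_Z_up[of a t] pl_eqs(6)[of a t] by (simp del: pl.simps)
  next
    assume "odd a" "(e,s') = (a+2*t, Y a t)"
    moreover have "a+2*t \<notin> pl (Z a t)" by simp
    ultimately show ?thesis using Z t ok_Z_y[of a t] pl_eqs(7)[of a t] by (simp del: pl.simps)
  qed
next
  case (V a t)
  have t: "1 \<le> t" "t \<le> 6" "even a" using assms(1) V by auto
  from assms(2) V have "(e,s') = (a, Z (a+1) t) \<or> (t < 6 \<and> (e,s') = (a+2*t+2, V a (t+1)))"
    by (auto split: if_splits)
  then show ?thesis
  proof (elim disjE conjE)
    assume "(e,s') = (a, Z (a+1) t)"
    moreover have "a \<notin> pl (V a t)" by simp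
    ultimately show ?thesis using V t ok_V_a[of a t] pl_eqs(8)[of a t] by (simp del: pl.simps)
  next
    assume "t < 6" "(e,s') = (a+2*t+2, V a (t+1))"
    moreover have "a+2*t+2 \<notin> pl (V a t)" by simp
    ultimately show ?thesis using V t ok_V_up[of a t] pl_eqs(9)[of a t] by (simp del: pl.simps)
  qed
next
  case (Y a t)
  have t: "1 \<le> t" "t \<le> 6" "odd a" using assms(1) Y by auto
  from assms(2) Y have "(t = 1 \<and> (e,s') = (a, S (a+3))) \<or> (t \<noteq> 1 \<and> (e,s') = (a, Y (a+2) (t-1)))"
    by (auto split: if_splits)
  then show ?thesis
  proof (elim disjE conjE)
    assume "t = 1" "(e,s') = (a, S (a+3))"
    moreover have "a \<notin> pl (Y a t)" using t by simp
    ultimately show ?thesis using Y ok_Y_a[of a t] pl_eqs(10)[of a] t by (simp del: pl.simps)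
  next
    assume "t \<noteq> 1" "(e,s') = (a, Y (a+2) (t-1))"
    moreover have "a \<notin> pl (Y a t)" using t by simp
    moreover have "2 \<le> t" using t \<open>t \<noteq> 1\<close> by simp
    ultimately show ?thesis using Y t ok_Y_a[of a t] pl_eqs(11)[of t a] by (auto simp del: pl.simps)
  qed
qed


fun vf :: "nat \<Rightarrow> nat set \<Rightarrow> nat list \<Rightarrow> bool" where
  "vf n P [] \<longleftrightarrow> P = {..<n}"
| "vf n P (e # xs) \<longleftrightarrow> e < n \<and> e \<notin> P \<and> okp e P \<and> vf n (insert e P) xs"

lemma finite_pl: "finite (pl s)"
proof -
  have "pl s \<subseteq> {..< amin s + 2 * (case s of S a \<Rightarrow> 0 | Z a t \<Rightarrow> t | V a t \<Rightarrow> t | Y a t \<Rightarrow> t) + 1}"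
    by (cases s) (auto simp del: odd_Suc_minus_one)
  then show ?thesis by (rule finite_subset) simp
qed

lemma below_amin: "x < amin s \<Longrightarrow> x \<in> pl s"
  by (cases s) auto

lemma amin_le_card: "amin s \<le> card (pl s)"
proof -
  have "{..<amin s} \<subseteq> pl s" using below_amin by auto
  then have "card {..<amin s} \<le> card (pl s)" using finite_pl by (rule card_mono[rotated])
  then show ?thesis by simp
qed

lemma first_move: "\<exists>s1. (amin s, s1) \<in> set (mv s)"
  by (cases s) auto

lemma filter_split:
  assumes "a < n" "a \<notin> P" "\<forall>x<a. x \<in> P"
  shows "filter (\<lambda>x. x \<notin> P) [0..<n] = a # filter (\<lambda>x. x \<notin> insert a P) [0..<n]"
proof -
  have e1: "[0..<n] = [0..<a] @ [a..<n]" using upt_add_eq_append[of 0 a "n-a"] assms(1) by simp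
  have e2: "[a..<n] = a # [Suc a..<n]" using assms(1) by (simp add: upt_conv_Cons)
  have f1: "filter (\<lambda>x. x \<notin> P) [0..<a] = []" using assms(3) by (simp add: filter_empty_conv)
  have f2: "filter (\<lambda>x. x \<notin> insert a P) [0..<a] = []" using assms(3) by (simp add: filter_empty_conv)
  have f3: "filter (\<lambda>x. x \<notin> P) [Suc a..<n] = filter (\<lambda>x. x \<notin> insert a P) [Suc a..<n]"
    by (rule filter_cong) auto
  show ?thesis unfolding e1 e2 using f1 f2 f3 assms(2) by simp
qed

lemma completion:
  assumes "okst s" "pl s \<subseteq> {..<n}"
  shows "vf n (pl s) (filter (\<lambda>x. x \<notin> pl s) [0..<n])"
  using assms
proof (induction "card ({..<n} - pl s)" arbitrary: s)
  case 0
  then have "{..<n} - pl s = {}" by simp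
  with 0 have "pl s = {..<n}" by auto
  then show ?case by (simp add: filter_empty_conv)
next
  case (Suc m)
  obtain s1 where m1: "(amin s, s1) \<in> set (mv s)" using first_move by blast
  note ok = mv_ok[OF Suc.prems(1) m1]
  define a where "a = amin s"
  have ne: "{..<n} - pl s \<noteq> {}"
  proof
    assume "{..<n} - pl s = {}"
    then have "card ({..<n} - pl s) = 0" by simp
    with Suc.hyps(2) show False by simp
  qed
  then obtain x where x: "x < n" "x \<notin> pl s" by auto
  have "a \<le> x" using x(2) below_amin[of x s] unfolding a_def by (cases "x < amin s") auto
  then have an: "a < n" using x by simp
  have pl1: "pl s1 = insert a (pl s)" using ok a_def by simp
  have sub1: "pl s1 \<subseteq> {..<n}" using pl1 an Suc.prems(2) by auto
  have "{..<n} - pl s1 = ({..<n} - pl s) - {a}" using pl1 by auto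
  moreover have "a \<in> {..<n} - pl s" using an ok a_def by auto
  ultimately have c1: "card ({..<n} - pl s1) = m"
    using Suc.hyps(2) by (simp add: card_Diff_singleton)
  have o1: "okst s1" using ok by simp
  have ih: "vf n (pl s1) (filter (\<lambda>x. x \<notin> pl s1) [0..<n])"
    using Suc.hyps(1)[OF c1[symmetric] o1 sub1] .
  have fs: "filter (\<lambda>x. x \<notin> pl s) [0..<n] = a # filter (\<lambda>x. x \<notin> pl s1) [0..<n]"
    unfolding pl1 by (rule filter_split) (use an ok a_def below_amin in auto)
  show ?case unfolding fs using an ok ih pl1 a_def by simp
qed

lemma vf_props:
  "vf n P L \<Longrightarrow> distinct L \<and> set L \<inter> P = {} \<and> P \<union> set L = {..<n} \<and>
     (\<forall>t<length L. okp (L!t) (P \<union> set (take t L)))"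
proof (induction L arbitrary: P)
  case Nil then show ?case by simp
next
  case (Cons e xs)
  from Cons.prems have h: "e < n" "e \<notin> P" "okp e P" "vf n (insert e P) xs" by auto
  note ih = Cons.IH[OF h(4)]
  show ?case
  proof (intro conjI allI impI)
    show "distinct (e # xs)" using ih by auto
    show "set (e # xs) \<inter> P = {}" using ih h by auto
    show "P \<union> set (e # xs) = {..<n}" using ih by auto
  next
    fix t assume t: "t < length (e # xs)"
    show "okp ((e # xs) ! t) (P \<union> set (take t (e # xs)))"
    proof (cases t)
      case 0 then show ?thesis using h by simp
    next
      case (Suc t')
      then have "t' < length xs" using t by simp
      then have "okp (xs ! t') (insert e P \<union> set (take t' xs))" using ih by blast
      then show ?thesis using Suc by simp
    qed
  qed
qed

fun W :: "nat \<Rightarrow> st \<Rightarrow> nat list set" where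
  "W 0 s = {[]}"
| "W (Suc l) s = (\<Union>p\<in>set (mv s). (\<lambda>xs. fst p # xs) ` W l (snd p))"

lemma W_len: "xs \<in> W l s \<Longrightarrow> length xs = l"
  by (induction l arbitrary: s xs) auto

lemma W_fin: "finite (W l s)"
  by (induction l arbitrary: s) auto

lemma card_pl_step: "okst s \<Longrightarrow> (e, s') \<in> set (mv s) \<Longrightarrow> card (pl s') = Suc (card (pl s))"
  using mv_ok[of s e s'] finite_pl[of s] by simp

lemma W_bound: "okst s \<Longrightarrow> xs \<in> W l s \<Longrightarrow> set xs \<subseteq> {..< card (pl s) + l + 14}"
proof (induction l arbitrary: s xs)
  case 0 then show ?case by simp
next
  case (Suc l)
  from Suc.prems(2) obtain e s' ys where es: "(e, s') \<in> set (mv s)" "ys \<in> W l s'" "xs = e # ys"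
    by auto
  note ok = mv_ok[OF Suc.prems(1) es(1)]
  have "e < card (pl s) + 14" using ok amin_le_card[of s] by simp
  moreover have "set ys \<subseteq> {..< card (pl s') + l + 14}" using Suc.IH ok es(2) by blast
  moreover have "card (pl s') = Suc (card (pl s))" using card_pl_step[OF Suc.prems(1) es(1)] .
  ultimately show ?case using es(3) by auto
qed

lemma W_vf: "okst s \<Longrightarrow> xs \<in> W l s \<Longrightarrow> pl s \<union> set xs \<subseteq> {..<n} \<Longrightarrow>
    vf n (pl s) (xs @ filter (\<lambda>x. x \<notin> pl s \<union> set xs) [0..<n])"
proof (induction l arbitrary: s xs)
  case 0 then show ?case using completion[of s n] by simp
next
  case (Suc l)
  from Suc.prems(2) obtain e s' ys where es: "(e, s') \<in> set (mv s)" "ys \<in> W l s'" "xs = e # ys"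
    by auto
  note ok = mv_ok[OF Suc.prems(1) es(1)]
  have u: "pl s \<union> set xs = pl s' \<union> set ys" using ok es(3) by auto
  have ih: "vf n (pl s') (ys @ filter (\<lambda>x. x \<notin> pl s' \<union> set ys) [0..<n])"
    using Suc.IH[of s' ys] ok es(2) Suc.prems(3) u by simp
  have "e < n" using Suc.prems(3) es(3) by auto
  then show ?case using ok ih u es(3) by simp
qed

lemma mv_distinct: "okst s \<Longrightarrow> distinct (map fst (mv s))"
  by (cases s) auto

lemma W_card: "okst s \<Longrightarrow> card (W (Suc l) s) = (\<Sum>p\<leftarrow>mv s. card (W l (snd p)))"
proof -
  assume o: "okst s"
  have d: "distinct (map fst (mv s))" using mv_distinct[OF o] .
  then have d2: "distinct (mv s)" by (simp add: distinct_map)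
  have "card (W (Suc l) s) = (\<Sum>p\<in>set (mv s). card ((\<lambda>xs. fst p # xs) ` W l (snd p)))"
    unfolding W.simps
  proof (rule card_UN_disjoint)
    show "finite (set (mv s))" by simp
    show "\<forall>p\<in>set (mv s). finite ((\<lambda>xs. fst p # xs) ` W l (snd p))" using W_fin by auto
    show "\<forall>p\<in>set (mv s). \<forall>q\<in>set (mv s). p \<noteq> q \<longrightarrow>
        (\<lambda>xs. fst p # xs) ` W l (snd p) \<inter> (\<lambda>xs. fst q # xs) ` W l (snd q) = {}"
    proof (intro ballI impI)
      fix p q assume pq: "p \<in> set (mv s)" "q \<in> set (mv s)" "p \<noteq> q"
      have "fst p \<noteq> fst q" using d pq by (metis distinct_map inj_on_eq_iff)
      then show "(\<lambda>xs. fst p # xs) ` W l (snd p) \<inter> (\<lambda>xs. fst q # xs) ` W l (snd q) = {}" by auto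
    qed
  qed
  also have "\<dots> = (\<Sum>p\<in>set (mv s). card (W l (snd p)))"
    by (intro sum.cong refl card_image) (auto simp: inj_on_def)
  also have "\<dots> = (\<Sum>p\<leftarrow>mv s. card (W l (snd p)))"
    using d2 by (simp add: sum_list_distinct_conv_sum_set)
  finally show ?thesis .
qed


fun wt :: "st \<Rightarrow> real" where
  "wt (S a) = (if even a then 2000 else 1786) / 2000"
| "wt (Z a t) = (if even a then [1271,805,504,308,176,80] ! (t-1)
                 else [1940,1589,1155,773,467,220] ! (t-1)) / 2000"
| "wt (V a t) = [1356,1053,735,467,257,100] ! (t-1) / 2000"
| "wt (Y a t) = [906,411,186,84,38,17] ! (t-1) / 2000"

lemma six_cases: "1 \<le> (t::nat) \<Longrightarrow> t \<le> 6 \<Longrightarrow> t = 1 \<or> t = 2 \<or> t = 3 \<or> t = 4 \<or> t = 5 \<or> t = 6"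
  by auto

lemma wt_step: "okst s \<Longrightarrow> 11/5 * wt s \<le> (\<Sum>p\<leftarrow>mv s. wt (snd p))"
proof (cases s)
  case (S a) then show ?thesis by (cases "even a") auto
next
  case (Z a t)
  assume "okst s"
  then have "t = 1 \<or> t = 2 \<or> t = 3 \<or> t = 4 \<or> t = 5 \<or> t = 6" using Z six_cases by simp
  then show ?thesis using Z by (cases "even a") auto
next
  case (V a t)
  assume "okst s"
  then have "t = 1 \<or> t = 2 \<or> t = 3 \<or> t = 4 \<or> t = 5 \<or> t = 6" "even a" using V six_cases by auto
  then show ?thesis using V by auto
next
  case (Y a t)
  assume "okst s"
  then have "t = 1 \<or> t = 2 \<or> t = 3 \<or> t = 4 \<or> t = 5 \<or> t = 6" "odd a" using Y six_cases by auto
  then show ?thesis using Y by auto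
qed

lemma wt_bounds: "okst s \<Longrightarrow> 0 \<le> wt s \<and> wt s \<le> 1"
proof (cases s)
  case (S a) then show ?thesis by auto
next
  case (Z a t)
  assume "okst s"
  then have "t = 1 \<or> t = 2 \<or> t = 3 \<or> t = 4 \<or> t = 5 \<or> t = 6" using Z six_cases by simp
  then show ?thesis using Z by auto
next
  case (V a t)
  assume "okst s"
  then have "t = 1 \<or> t = 2 \<or> t = 3 \<or> t = 4 \<or> t = 5 \<or> t = 6" using V six_cases by auto
  then show ?thesis using V by auto
next
  case (Y a t)
  assume "okst s"
  then have "t = 1 \<or> t = 2 \<or> t = 3 \<or> t = 4 \<or> t = 5 \<or> t = 6" using Y six_cases by auto
  then show ?thesis using Y by auto
qed

lemma real_sum_list: "real (\<Sum>x\<leftarrow>xs. f x) = (\<Sum>x\<leftarrow>xs. real (f x))"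
  by (induction xs) auto

lemma W_lower: "okst s \<Longrightarrow> (11/5)^l * wt s \<le> real (card (W l s))"
proof (induction l arbitrary: s)
  case 0 then show ?case using wt_bounds[of s] by simp
next
  case (Suc l)
  have "(11/5)^(Suc l) * wt s = (11/5)^l * (11/5 * wt s)" by simp
  also have "\<dots> \<le> (11/5)^l * (\<Sum>p\<leftarrow>mv s. wt (snd p))"
    using wt_step[OF Suc.prems] by (intro mult_left_mono) auto
  also have "\<dots> = (\<Sum>p\<leftarrow>mv s. (11/5)^l * wt (snd p))"
    by (simp add: sum_list_const_mult)
  also have "\<dots> \<le> (\<Sum>p\<leftarrow>mv s. real (card (W l (snd p))))"
  proof (rule sum_list_mono)
    fix p assume "p \<in> set (mv s)"
    then have "okst (snd p)" using mv_ok[OF Suc.prems, of "fst p" "snd p"] by simp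
    then show "(11/5)^l * wt (snd p) \<le> real (card (W l (snd p)))" using Suc.IH by blast
  qed
  also have "\<dots> = real (card (W (Suc l) s))"
    using W_card[OF Suc.prems, of l] by (simp add: real_sum_list)
  finally show ?case .
qed


lemma prefers_set: "prefers L x y \<Longrightarrow> x \<in> set L \<and> y \<in> set L"
  unfolding prefers_def by auto

lemma prefers_irrefl: "distinct L \<Longrightarrow> \<not> prefers L x x"
  unfolding prefers_def using nth_eq_iff_index_eq by fastforce

lemma prefers_asym:
  assumes d: "distinct L" and p: "prefers L x y" shows "\<not> prefers L y x"
proof
  assume q: "prefers L y x"
  from p obtain i j where ij: "i<j" "j<length L" "L!i = x" "L!j = y" unfolding prefers_def by blast
  from q obtain i' j' where ij': "i'<j'" "j'<length L" "L!i' = y" "L!j' = x" unfolding prefers_def by blast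
  have "i = j'" using d ij ij' nth_eq_iff_index_eq[of L i j'] by simp
  moreover have "j = i'" using d ij ij' nth_eq_iff_index_eq[of L j i'] by simp
  ultimately show False using ij ij' by simp
qed

lemma prefers_trans:
  assumes d: "distinct L" and p: "prefers L x y" and q: "prefers L y z" shows "prefers L x z"
proof -
  from p obtain i j where ij: "i<j" "j<length L" "L!i = x" "L!j = y" unfolding prefers_def by blast
  from q obtain j' k where jk: "j'<k" "k<length L" "L!j' = y" "L!k = z" unfolding prefers_def by blast
  have "j = j'" using d ij jk nth_eq_iff_index_eq[of L j j'] by simp
  then show ?thesis unfolding prefers_def using ij jk by (intro exI[of _ i] exI[of _ k]) auto
qed

lemma prefers_total:
  assumes d: "distinct L" and xy: "x \<in> set L" "y \<in> set L" "x \<noteq> y"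
  shows "prefers L x y \<or> prefers L y x"
proof -
  obtain i where i: "i < length L" "L!i = x" using xy by (auto simp: in_set_conv_nth)
  obtain j where j: "j < length L" "L!j = y" using xy by (auto simp: in_set_conv_nth)
  have "i \<noteq> j" using i j xy by auto
  then have "i < j \<or> j < i" by arith
  then show ?thesis unfolding prefers_def using i j by blast
qed

lemma prefers_take:
  assumes d: "distinct L" and t: "t < length L"
  shows "prefers L x (L!t) \<longleftrightarrow> x \<in> set (take t L)"
proof
  assume "prefers L x (L!t)"
  then obtain i j where ij: "i<j" "j<length L" "L!i = x" "L!j = L!t" unfolding prefers_def by blast
  have "j = t" using d ij t nth_eq_iff_index_eq[of L j t] by simp
  then show "x \<in> set (take t L)" using ij by (auto simp: in_set_conv_nth intro!: exI[of _ i])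
next
  assume "x \<in> set (take t L)"
  then obtain i where "i < length (take t L)" "take t L ! i = x" by (auto simp: in_set_conv_nth)
  then show "prefers L x (L!t)" using t unfolding prefers_def by (intro exI[of _ i] exI[of _ t]) auto
qed

lemma prefers_map_Suc: "prefers (map Suc L) (Suc x) (Suc y) \<longleftrightarrow> prefers L x y"
proof
  assume "prefers (map Suc L) (Suc x) (Suc y)"
  then obtain i j where "i<j" "j<length L" "map Suc L ! i = Suc x" "map Suc L ! j = Suc y"
    unfolding prefers_def by auto
  then show "prefers L x y" unfolding prefers_def by (intro exI[of _ i] exI[of _ j]) auto
next
  assume "prefers L x y"
  then obtain i j where "i<j" "j<length L" "L ! i = x" "L ! j = y"
    unfolding prefers_def by auto
  then show "prefers (map Suc L) (Suc x) (Suc y)" unfolding prefers_def by (intro exI[of _ i] exI[of _ j]) auto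
qed

lemma len_filter_mono:
  "(\<And>L. L \<in> set P \<Longrightarrow> A L \<Longrightarrow> B L) \<Longrightarrow> length (filter A P) \<le> length (filter B P)"
  by (induction P) auto

lemma len_filter_disj:
  "(\<And>L. L \<in> set P \<Longrightarrow> A L \<Longrightarrow> \<not> B L) \<Longrightarrow> length (filter A P) + length (filter B P) \<le> length P"
  by (induction P) auto

lemma cyc_G1:
  assumes wf: "\<forall>L\<in>set P. distinct L \<and> u \<in> set L \<and> v \<in> set L \<and> w \<in> set L"
    and d: "u \<noteq> v" "v \<noteq> w" "u \<noteq> w"
    and m2: "majority P v w" and m3: "majority P w u"
    and nl: "\<forall>L\<in>set P. \<not> (prefers L v u \<and> prefers L w u)"
  shows False
proof -
  have "length (filter (\<lambda>L. prefers L w u) P) \<le> length (filter (\<lambda>L. prefers L w v) P)"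
  proof (rule len_filter_mono)
    fix L assume L: "L \<in> set P" "prefers L w u"
    then have "\<not> prefers L v u" using nl by auto
    then have "prefers L u v" using prefers_total[of L u v] wf L d by auto
    then show "prefers L w v" using prefers_trans[of L w u v] wf L by auto
  qed
  moreover have "length (filter (\<lambda>L. prefers L v w) P) + length (filter (\<lambda>L. prefers L w v) P) \<le> length P"
    by (rule len_filter_disj) (use prefers_asym wf in blast)
  ultimately show False using m2 m3 unfolding majority_def by linarith
qed

lemma cyc_G2:
  assumes wf: "\<forall>L\<in>set P. distinct L \<and> u \<in> set L \<and> v \<in> set L \<and> w \<in> set L"
    and d: "u \<noteq> v" "v \<noteq> w" "u \<noteq> w"
    and m1: "majority P u v" and m2: "majority P v w"
    and nf: "\<forall>L\<in>set P. \<not> (prefers L u v \<and> prefers L u w)"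
  shows False
proof -
  have "length (filter (\<lambda>L. prefers L u v) P) \<le> length (filter (\<lambda>L. prefers L w v) P)"
  proof (rule len_filter_mono)
    fix L assume L: "L \<in> set P" "prefers L u v"
    then have "\<not> prefers L u w" using nf by auto
    then have "prefers L w u" using prefers_total[of L u w] wf L d by auto
    then show "prefers L w v" using prefers_trans[of L w u v] wf L by auto
  qed
  moreover have "length (filter (\<lambda>L. prefers L v w) P) + length (filter (\<lambda>L. prefers L w v) P) \<le> length P"
    by (rule len_filter_disj) (use prefers_asym wf in blast)
  ultimately show False using m1 m2 unfolding majority_def by linarith
qed

lemma no_cycle:
  assumes wf: "\<forall>L\<in>set P. distinct L \<and> x \<in> set L \<and> y \<in> set L \<and> z \<in> set L"
    and d: "x \<noteq> y" "y \<noteq> z" "x \<noteq> z"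
    and c: "majority P x y" "majority P y z" "majority P z x"
    and h: "(\<forall>L\<in>set P. \<not> (prefers L y x \<and> prefers L z x)) \<or>
            (\<forall>L\<in>set P. \<not> (prefers L z y \<and> prefers L x y)) \<or>
            (\<forall>L\<in>set P. \<not> (prefers L x z \<and> prefers L y z)) \<or>
            (\<forall>L\<in>set P. \<not> (prefers L x y \<and> prefers L x z)) \<or>
            (\<forall>L\<in>set P. \<not> (prefers L y z \<and> prefers L y x)) \<or>
            (\<forall>L\<in>set P. \<not> (prefers L z x \<and> prefers L z y))"
  shows False
proof -
  have w1: "\<forall>L\<in>set P. distinct L \<and> y \<in> set L \<and> z \<in> set L \<and> x \<in> set L" using wf by blast
  have w2: "\<forall>L\<in>set P. distinct L \<and> z \<in> set L \<and> x \<in> set L \<and> y \<in> set L" using wf by blast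
  from h show False
  proof (elim disjE)
    assume "\<forall>L\<in>set P. \<not> (prefers L y x \<and> prefers L z x)"
    then show False using cyc_G1[OF wf d c(2) c(3)] by blast
  next
    assume "\<forall>L\<in>set P. \<not> (prefers L z y \<and> prefers L x y)"
    then show False using cyc_G1[OF w1 d(2) d(3)[symmetric] d(1)[symmetric] c(3) c(1)] by blast
  next
    assume "\<forall>L\<in>set P. \<not> (prefers L x z \<and> prefers L y z)"
    then show False using cyc_G1[OF w2 d(3)[symmetric] d(1) d(2)[symmetric] c(1) c(2)] by blast
  next
    assume "\<forall>L\<in>set P. \<not> (prefers L x y \<and> prefers L x z)"
    then show False using cyc_G2[OF wf d c(1) c(2)] by blast
  next
    assume "\<forall>L\<in>set P. \<not> (prefers L y z \<and> prefers L y x)"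
    then show False using cyc_G2[OF w1 d(2) d(3)[symmetric] d(1)[symmetric] c(2) c(3)] by blast
  next
    assume "\<forall>L\<in>set P. \<not> (prefers L z x \<and> prefers L z y)"
    then show False using cyc_G2[OF w2 d(3)[symmetric] d(1) d(2)[symmetric] c(3) c(1)] by blast
  qed
qed

lemma sen:
  assumes wf: "\<forall>L\<in>set P. distinct L \<and> set L = {1..n}"
    and od: "odd (length P)"
    and cond: "\<And>a b c. 1 \<le> a \<Longrightarrow> a < b \<Longrightarrow> b < c \<Longrightarrow> c \<le> n \<Longrightarrow>
       (\<forall>L\<in>set P. \<not> (prefers L b a \<and> prefers L c a)) \<or> (\<forall>L\<in>set P. \<not> (prefers L c a \<and> prefers L c b))"
    and xyz: "x \<in> {1..n}" "y \<in> {1..n}" "z \<in> {1..n}"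
    and m1: "majority P x y" and m2: "majority P y z"
  shows "majority P x z"
proof (rule ccontr)
  assume nm: "\<not> majority P x z"
  have irr: "\<And>u. \<not> majority P u u"
  proof -
    fix u
    have "filter (\<lambda>L. prefers L u u) P = []" using wf prefers_irrefl by (auto simp: filter_empty_conv)
    then show "\<not> majority P u u" unfolding majority_def by simp
  qed
  have dxy: "x \<noteq> y" using m1 irr by auto
  have dyz: "y \<noteq> z" using m2 irr by auto
  have dxz: "x \<noteq> z"
  proof
    assume "x = z"
    then have "majority P y x" using m2 by simp
    moreover have "length (filter (\<lambda>L. prefers L x y) P) + length (filter (\<lambda>L. prefers L y x) P) \<le> length P"
      by (rule len_filter_disj) (use prefers_asym wf in blast)
    ultimately show False using m1 unfolding majority_def by linarith
  qed
  have wf3: "\<forall>L\<in>set P. distinct L \<and> x \<in> set L \<and> y \<in> set L \<and> z \<in> set L" using wf xyz by blast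
  have m3: "majority P z x"
  proof -
    have fe: "filter (\<lambda>L. \<not> prefers L x z) P = filter (\<lambda>L. prefers L z x) P"
    proof (rule filter_cong)
      fix L assume "L \<in> set P"
      then show "(\<not> prefers L x z) = prefers L z x"
        using prefers_total[of L x z] prefers_asym[of L] wf3 dxz by blast
    qed (rule refl)
    have s: "length (filter (\<lambda>L. prefers L x z) P) + length (filter (\<lambda>L. prefers L z x) P) = length P"
      using sum_length_filter_compl[of "\<lambda>L. prefers L x z" P] fe by simp
    have "2 * length (filter (\<lambda>L. prefers L x z) P) \<noteq> length P"
    proof
      assume "2 * length (filter (\<lambda>L. prefers L x z) P) = length P"
      then have "even (length P)" by (metis dvd_triv_left)
      with od show False by simp
    qed
    then show ?thesis using nm s unfolding majority_def by linarith
  qed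
  have h: "(\<forall>L\<in>set P. \<not> (prefers L y x \<and> prefers L z x)) \<or>
            (\<forall>L\<in>set P. \<not> (prefers L z y \<and> prefers L x y)) \<or>
            (\<forall>L\<in>set P. \<not> (prefers L x z \<and> prefers L y z)) \<or>
            (\<forall>L\<in>set P. \<not> (prefers L x y \<and> prefers L x z)) \<or>
            (\<forall>L\<in>set P. \<not> (prefers L y z \<and> prefers L y x)) \<or>
            (\<forall>L\<in>set P. \<not> (prefers L z x \<and> prefers L z y))"
  proof -
    have "(x<y \<and> y<z) \<or> (x<z \<and> z<y) \<or> (y<x \<and> x<z) \<or> (y<z \<and> z<x) \<or> (z<x \<and> x<y) \<or> (z<y \<and> y<x)"
      using dxy dyz dxz by arith
    then show ?thesis
    proof (elim disjE conjE)
      assume "x<y" "y<z" then show ?thesis using cond[of x y z] xyz by auto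
    next
      assume "x<z" "z<y" then show ?thesis using cond[of x z y] xyz by auto
    next
      assume "y<x" "x<z" then show ?thesis using cond[of y x z] xyz by auto
    next
      assume "y<z" "z<x" then show ?thesis using cond[of y z x] xyz by auto
    next
      assume "z<x" "x<y" then show ?thesis using cond[of z x y] xyz by auto
    next
      assume "z<y" "y<x" then show ?thesis using cond[of z y x] xyz by auto
    qed
  qed
  show False using no_cycle[OF wf3 dxy dyz dxz m1 m2 m3 h] .
qed


lemma vf_triples:
  assumes v: "vf n {} L" and ijk: "i < j" "j < k" "k < n"
  shows "(is13 i j k \<longrightarrow> \<not> (prefers L j i \<and> prefers L k i)) \<and>
         (\<not> is13 i j k \<longrightarrow> \<not> (prefers L k i \<and> prefers L k j))"
proof -
  note vp = vf_props[OF v]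
  have d: "distinct L" and sL: "set L = {..<n}" using vp by auto
  have okt: "\<And>t. t < length L \<Longrightarrow> okp (L!t) (set (take t L))" using vp by auto
  have "i \<in> set L" using sL ijk by auto
  then obtain ti where ti: "ti < length L" "L!ti = i" by (auto simp: in_set_conv_nth)
  have "k \<in> set L" using sL ijk by auto
  then obtain tk where tk: "tk < length L" "L!tk = k" by (auto simp: in_set_conv_nth)
  have pi: "\<And>x. prefers L x i \<longleftrightarrow> x \<in> set (take ti L)" using prefers_take[OF d ti(1)] ti(2) by simp
  have pk: "\<And>x. prefers L x k \<longleftrightarrow> x \<in> set (take tk L)" using prefers_take[OF d tk(1)] tk(2) by simp
  have oi: "okp i (set (take ti L))" using okt[OF ti(1)] ti(2) by simp
  have ok: "okp k (set (take tk L))" using okt[OF tk(1)] tk(2) by simp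
  show ?thesis
  proof (intro conjI impI)
    assume "is13 i j k"
    then show "\<not> (prefers L j i \<and> prefers L k i)" using oi ijk unfolding okp_def pi by blast
  next
    assume "\<not> is13 i j k"
    then have "prefers L i k \<or> prefers L j k" using ok ijk unfolding okp_def pk by blast
    then show "\<not> (prefers L k i \<and> prefers L k j)" using prefers_asym[OF d] by blast
  qed
qed

definition Dn :: "nat \<Rightarrow> nat list set" where
  "Dn n = map Suc ` {L. vf n {} L}"

lemma Dn_lin: "L' \<in> Dn n \<Longrightarrow> is_linorder n L'"
proof -
  assume "L' \<in> Dn n"
  then obtain L where L: "vf n {} L" "L' = map Suc L" unfolding Dn_def by auto
  have "distinct L" "set L = {..<n}" using vf_props[OF L(1)] by auto
  then show ?thesis unfolding is_linorder_def L(2) by (simp add: distinct_map image_Suc_lessThan)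
qed

lemma Dn_cond:
  assumes L': "L' \<in> Dn n" and abc: "1 \<le> a" "a < b" "b < c" "c \<le> n"
  shows "(is13 (a-1) (b-1) (c-1) \<longrightarrow> \<not> (prefers L' b a \<and> prefers L' c a)) \<and>
         (\<not> is13 (a-1) (b-1) (c-1) \<longrightarrow> \<not> (prefers L' c a \<and> prefers L' c b))"
proof -
  obtain L where L: "vf n {} L" "L' = map Suc L" using L' unfolding Dn_def by auto
  obtain i where i: "a = Suc i" using abc by (cases a) auto
  obtain j where j: "b = Suc j" using abc by (cases b) auto
  obtain k where k: "c = Suc k" using abc by (cases c) auto
  have "i < j" "j < k" "k < n" using abc i j k by auto
  from vf_triples[OF L(1) this] show ?thesis unfolding L(2) i j k by (simp add: prefers_map_Suc)
qed

lemma Dn_condorcet: "condorcet_domain n (Dn n)"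
  unfolding condorcet_domain_def is_domain_def
proof (intro conjI allI impI ballI)
  show "Dn n \<subseteq> {L. is_linorder n L}" using Dn_lin by auto
next
  fix P a b c
  assume P: "set P \<subseteq> Dn n \<and> odd (length P)" and abc: "a \<in> {1..n}" "b \<in> {1..n}" "c \<in> {1..n}"
    and m: "majority P a b \<and> majority P b c"
  have wf: "\<forall>L\<in>set P. distinct L \<and> set L = {1..n}"
    using P Dn_lin unfolding is_linorder_def by blast
  show "majority P a c"
  proof (rule sen[OF wf _ _ abc])
    show "odd (length P)" using P by simp
    show "majority P a b" "majority P b c" using m by auto
  next
    fix x y z assume xyz: "1 \<le> x" "x < y" "y < z" "z \<le> n"
    show "(\<forall>L\<in>set P. \<not> (prefers L y x \<and> prefers L z x)) \<or> (\<forall>L\<in>set P. \<not> (prefers L z x \<and> prefers L z y))"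
    proof (cases "is13 (x-1) (y-1) (z-1)")
      case True
      then show ?thesis using Dn_cond[OF _ xyz] P by blast
    next
      case False
      then show ?thesis using Dn_cond[OF _ xyz] P by blast
    qed
  qed
qed

lemma card_le1:
  assumes d: "distinct L" and h: "\<not> (prefers L b a \<and> prefers L c a)"
  shows "card {y \<in> {a,b,c}. prefers L y a} \<le> 1"
proof -
  have na: "\<not> prefers L a a" using prefers_irrefl[OF d] .
  have "{y \<in> {a,b,c}. prefers L y a} \<subseteq> {b} \<or> {y \<in> {a,b,c}. prefers L y a} \<subseteq> {c}"
    using na h by auto
  then show ?thesis
  proof (elim disjE)
    assume "{y \<in> {a,b,c}. prefers L y a} \<subseteq> {b}"
    then have "card {y \<in> {a,b,c}. prefers L y a} \<le> card {b}" by (rule card_mono[rotated]) simp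
    then show ?thesis by simp
  next
    assume "{y \<in> {a,b,c}. prefers L y a} \<subseteq> {c}"
    then have "card {y \<in> {a,b,c}. prefers L y a} \<le> card {c}" by (rule card_mono[rotated]) simp
    then show ?thesis by simp
  qed
qed

lemma card_ne0:
  assumes "prefers L a c \<or> prefers L b c"
  shows "card {y \<in> {a,b,c}. prefers L y c} \<noteq> 0"
proof -
  have f: "finite {y \<in> {a,b,c}. prefers L y c}" by (rule finite_subset[where B="{a,b,c}"]) auto
  have "{y \<in> {a,b,c}. prefers L y c} \<noteq> {}" using assms by auto
  then show ?thesis using f by simp
qed

lemma Dn_peak_pit: "peak_pit n (Dn n)"
  unfolding peak_pit_def
proof (intro allI impI)
  fix a b c assume abc: "1 \<le> a \<and> a < b \<and> b < c \<and> c \<le> n"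
  show "\<exists>x\<in>{1,2,3}. never_cond (Dn n) a b c x 3 \<or> never_cond (Dn n) a b c x 1"
  proof (cases "is13 (a-1) (b-1) (c-1)")
    case True
    have "never_cond (Dn n) a b c 1 3"
      unfolding never_cond_def pos_in_triple_def
    proof
      fix L assume L: "L \<in> Dn n"
      have d: "distinct L" using Dn_lin[OF L] unfolding is_linorder_def by auto
      have "\<not> (prefers L b a \<and> prefers L c a)" using Dn_cond[OF L] abc True by blast
      then have "card {y \<in> {a,b,c}. prefers L y a} \<le> 1" using card_le1[OF d] by blast
      then show "1 + card {y \<in> {a, b, c}. prefers L y ([a, b, c] ! (1 - 1))} \<noteq> 3" by simp
    qed
    then show ?thesis by blast
  next
    case False
    have "never_cond (Dn n) a b c 3 1"
      unfolding never_cond_def pos_in_triple_def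
    proof
      fix L assume L: "L \<in> Dn n"
      have lin: "distinct L" "set L = {1..n}" using Dn_lin[OF L] unfolding is_linorder_def by auto
      have h: "\<not> (prefers L c a \<and> prefers L c b)" using Dn_cond[OF L] abc False by blast
      have t1: "prefers L a c \<or> prefers L c a" using prefers_total[OF lin(1), of a c] lin abc by auto
      have t2: "prefers L b c \<or> prefers L c b" using prefers_total[OF lin(1), of b c] lin abc by auto
      have "prefers L a c \<or> prefers L b c" using h t1 t2 by blast
      then have "card {y \<in> {a,b,c}. prefers L y c} \<noteq> 0" by (rule card_ne0)
      then show "1 + card {y \<in> {a, b, c}. prefers L y ([a, b, c] ! (3 - 1))} \<noteq> 1" by simp
    qed
    then show ?thesis by blast
  qed
qed

lemma fin_lin: "finite {L. is_linorder n L}"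
proof (rule finite_subset)
  show "{L. is_linorder n L} \<subseteq> {L. set L \<subseteq> {1..n} \<and> length L = n}"
    unfolding is_linorder_def using distinct_card by fastforce
  show "finite {L. set L \<subseteq> {1..n} \<and> length L = n}" by (rule finite_lists_length_eq) simp
qed

lemma fin_cd: "finite {D. condorcet_domain n D}"
proof (rule finite_subset)
  show "{D. condorcet_domain n D} \<subseteq> Pow {L. is_linorder n L}"
    unfolding condorcet_domain_def is_domain_def by auto
  show "finite (Pow {L. is_linorder n L})" using fin_lin by simp
qed

lemma h_ge: "card (Dn n) \<le> h_max n"
  unfolding h_max_def
proof (rule Max_ge)
  show "finite (card ` {D. condorcet_domain n D \<and> peak_pit n D})"
  proof (rule finite_imageI)
    show "finite {D. condorcet_domain n D \<and> peak_pit n D}"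
      by (rule finite_subset[OF _ fin_cd[of n]]) auto
  qed
  show "card (Dn n) \<in> card ` {D. condorcet_domain n D \<and> peak_pit n D}"
    using Dn_condorcet Dn_peak_pit by auto
qed

lemma h_le_f: "h_max n \<le> f_max n"
  unfolding h_max_def f_max_def
proof (rule Max_mono)
  show "card ` {D. condorcet_domain n D \<and> peak_pit n D} \<subseteq> card ` {D. condorcet_domain n D}" by auto
  show "card ` {D. condorcet_domain n D \<and> peak_pit n D} \<noteq> {}" using Dn_condorcet Dn_peak_pit by auto
  show "finite (card ` {D. condorcet_domain n D})" using fin_cd by simp
qed

lemma card_Dn:
  assumes "l + 14 \<le> n"
  shows "(11/5::real)^l \<le> real (card (Dn n))"
proof -
  define F where "F xs = map Suc (xs @ filter (\<lambda>x. x \<notin> set xs) [0..<n])" for xs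
  have sub: "F ` W l (S 0) \<subseteq> Dn n"
  proof
    fix L' assume "L' \<in> F ` W l (S 0)"
    then obtain xs where xs: "xs \<in> W l (S 0)" "L' = F xs" by auto
    have "set xs \<subseteq> {..< l + 14}" using W_bound[of "S 0" xs l] xs by simp
    then have "pl (S 0) \<union> set xs \<subseteq> {..<n}" using assms by auto
    then have "vf n (pl (S 0)) (xs @ filter (\<lambda>x. x \<notin> pl (S 0) \<union> set xs) [0..<n])"
      using W_vf[of "S 0" xs l n] xs by simp
    then have v: "vf n {} (xs @ filter (\<lambda>x. x \<notin> set xs) [0..<n])" by simp
    have Leq: "L' = map Suc (xs @ filter (\<lambda>x. x \<notin> set xs) [0..<n])" using xs(2) F_def by simp
    show "L' \<in> Dn n" unfolding Dn_def by (rule image_eqI[where f="map Suc" and x="xs @ filter (\<lambda>x. x \<notin> set xs) [0..<n]", OF Leq]) (simp add: v)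
  qed
  have inj: "inj_on F (W l (S 0))"
  proof (rule inj_onI)
    fix xs ys assume xs: "xs \<in> W l (S 0)" and ys: "ys \<in> W l (S 0)" and e: "F xs = F ys"
    have "xs @ filter (\<lambda>x. x \<notin> set xs) [0..<n] = ys @ filter (\<lambda>x. x \<notin> set ys) [0..<n]"
    proof -
      have "map Suc (xs @ filter (\<lambda>x. x \<notin> set xs) [0..<n]) = map Suc (ys @ filter (\<lambda>x. x \<notin> set ys) [0..<n])"
        using e unfolding F_def .
      then show ?thesis using inj_map_eq_map[OF inj_Suc] by blast
    qed
    moreover have "length xs = length ys" using W_len[OF xs] W_len[OF ys] by simp
    ultimately show "xs = ys" by simp
  qed
  have fin: "finite (Dn n)" by (rule finite_subset[OF _ fin_lin[of n]]) (use Dn_lin in auto)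
  have "card (W l (S 0)) \<le> card (Dn n)" by (rule card_inj_on_le[OF inj sub fin])
  moreover have "(11/5)^l * wt (S 0) \<le> real (card (W l (S 0)))" by (rule W_lower) simp
  ultimately show ?thesis by simp
qed


theorem mainTheorem18:
  shows "(\<exists>C::real > 0. \<exists>N. \<forall>n\<ge>N.
            real (h_max n) \<le> real (f_max n) \<and>
            C * (sqrt (2 + 2 * sqrt 2)) ^ n \<le> real (h_max n))
       \<and> (\<exists>N. \<forall>n\<ge>N. real (h_max n) > (2.1973::real) ^ n)"
proof -
  have sq2: "sqrt 2 \<le> (141422/100000::real)" by (rule real_le_lsqrt) (auto simp: power2_eq_square)
  have lam: "sqrt (2 + 2 * sqrt 2) \<le> (21974/10000::real)"
    by (rule real_le_lsqrt) (use sq2 in \<open>auto simp: power2_eq_square\<close>)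
  define r :: real where "r = 21974/10000"
  define q :: real where "q = (11/5) / r"
  have q1: "1 < q" unfolding q_def r_def by simp
  obtain N0 where N0: "(11/5::real)^14 < q^N0" using real_arch_pow[OF q1] by blast
  define N where "N = max N0 14"
  have key: "r^n \<le> (11/5)^(n-14)" if nN: "N \<le> n" for n
  proof -
    have n14: "14 \<le> n" and nN0: "N0 \<le> n" using nN unfolding N_def by auto
    have "q^N0 \<le> q^n" using q1 nN0 by (intro power_increasing) auto
    then have "(11/5)^14 \<le> q^n" using N0 by simp
    then have "(11/5)^14 * r^n \<le> q^n * r^n" by (intro mult_right_mono) (auto simp: r_def)
    also have "q^n * r^n = (11/5::real)^n" unfolding q_def r_def by (simp add: power_mult_distrib[symmetric])
    also have "(11/5::real)^n = (11/5)^14 * (11/5)^(n-14)" using n14 by (simp add: power_add[symmetric])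
    finally show "r^n \<le> (11/5)^(n-14)" by simp
  qed
  have hb: "r^n \<le> real (h_max n)" if nN: "N \<le> n" for n
  proof -
    have "14 \<le> n" using nN unfolding N_def by auto
    then have "(11/5::real)^(n-14) \<le> real (card (Dn n))" using card_Dn[of "n-14" n] by simp
    also have "\<dots> \<le> real (h_max n)" using h_ge[of n] by simp
    finally show ?thesis using key[OF nN] by simp
  qed
  have part1: "\<exists>C::real > 0. \<exists>N. \<forall>n\<ge>N.
            real (h_max n) \<le> real (f_max n) \<and>
            C * (sqrt (2 + 2 * sqrt 2)) ^ n \<le> real (h_max n)"
  proof (intro exI[of _ "1::real"] conjI exI[of _ N] allI impI)
    show "(0::real) < 1" by simp
  next
    fix n assume nN: "N \<le> n"
    show "real (h_max n) \<le> real (f_max n)" using h_le_f[of n] by simp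
    have "sqrt (2 + 2 * sqrt 2) ^ n \<le> r ^ n" using lam unfolding r_def by (intro power_mono) auto
    then show "1 * sqrt (2 + 2 * sqrt 2) ^ n \<le> real (h_max n)" using hb[OF nN] by simp
  qed
  have part2: "\<exists>N. \<forall>n\<ge>N. real (h_max n) > (2.1973::real) ^ n"
  proof (intro exI[of _ N] allI impI)
    fix n assume nN: "N \<le> n"
    then have "0 < n" unfolding N_def by auto
    then have "(2.1973::real) ^ n < r ^ n" unfolding r_def by (intro power_strict_mono) auto
    then show "real (h_max n) > (2.1973::real) ^ n" using hb[OF nN] by simp
  qed
  show ?thesis using part1 part2 by blast
qed

end
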